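(* Let $\underline\gamma$ be an $\infty$-complete infinite path in a Rauzy diagram, starting at $\pi$, and let $w\in\mathbb R^{\mathcal A}$, $w\neq0$. The set $\mathrm{Aff}(\underline\gamma,w)$ is nonempty if and only if the hyperplane $\{\lambda:\sum_\alpha\lambda_\alpha w_\alpha=0\}$ contains some $\lambda\in(\mathbb R_{>0})^{\mathcal A}$ such that the standard i.e.m. $T_{\pi,\lambda}$ has Rauzy–Veech path equal to $\underline\gamma$. In that case the set $\mathrm{Aff}^{(1)}(\underline\gamma,w)$, parametrized by the vector of lengths $(|I^t_\alpha|)_{\alpha\in\mathcal A}$, is convex and compact.
   Context: Affine i.e.m., standard i.e.m. $T_{\pi,\lambda}$, slope vector, Rauzy–Veech algorithm and Rauzy diagram as usual: the Rauzy–Veech step replaces the map by its first return to $(0,\max(u^t_{d-1},u^b_{d-1}))$ where $u^t_{d-1},u^b_{d-1}$ are the left endpoints of the last top and last bottom intervals; the arrow has top type with winner $\alpha_t$ if $u^t_{d-1}<u^b_{d-1}$ and bottom type with winner $\alpha_b$ otherwise ($\pi_t(\alpha_t)=\pi_b(\alpha_b)=d$). A map with no connection has an infinite Rauzy–Veech path. A path is complete if every letter of $\mathcal A$ is the winner of at least one of its arrows, and an infinite path is $\infty$-complete if it is a concatenation of infinitely many complete paths. $\mathrm{Aff}(\underline\gamma,w)$ is the set of affine i.e.m. with slope vector $\exp w$ (i.e. $|I^b_\alpha|=e^{w_\alpha}|I^t_\alpha|$) whose Rauzy–Veech path is $\underline\gamma$; $\mathrm{Aff}^{(1)}(\underline\gamma,w)$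 is the subset of those defined on $[0,1]$. *)

theory Defs
  imports "HOL-Analysis.Analysis"
begin

text \<open>The alphabet is a finite type 'a, d = CARD('a).  A combinatorial datum
 pi = (pi_t, pi_b) is a pair of bijections 'a -> {1..d}.\<close>

type_synonym 'a comb = "('a \<Rightarrow> nat) \<times> ('a \<Rightarrow> nat)"

definition valid_comb :: "'a::finite comb \<Rightarrow> bool" where
  "valid_comb p \<longleftrightarrow> bij_betw (fst p) UNIV {1..CARD('a)} \<and> bij_betw (snd p) UNIV {1..CARD('a)}"

definition irreducible :: "'a::finite comb \<Rightarrow> bool" where
  "irreducible p \<longleftrightarrow> valid_comb p \<and>
     (\<forall>k. 1 \<le> k \<and> k < CARD('a) \<longrightarrow> fst p -` {1..k} \<noteq> snd p -` {1..k})"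

text \<open>Last letters on top and bottom: pi_t(alpha_t) = pi_b(alpha_b) = d.\<close>
definition top_last :: "'a::finite comb \<Rightarrow> 'a" where
  "top_last p = (THE a. fst p a = CARD('a))"

definition bot_last :: "'a::finite comb \<Rightarrow> 'a" where
  "bot_last p = (THE a. snd p a = CARD('a))"

datatype arrow_type = Top | Bot

text \<open>Top type: the loser alpha_b is moved in the bottom
 row to the position right after the winner alpha_t.  Bottom type: the loser alpha_t is
 moved in the top row right after the winner alpha_b.\<close>
definition rauzy_move :: "arrow_type \<Rightarrow> 'a::finite comb \<Rightarrow> 'a comb" where
  "rauzy_move t p = (let aT = top_last p; aB = bot_last p in
     (case t of
        Top \<Rightarrow> (fst p, \<lambda>b. if b = aB then snd p aT + 1
                          else if snd p b > snd p aT then snd p b + 1 else snd p b)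
      | Bot \<Rightarrow> (\<lambda>b. if b = aT then fst p aB + 1
                     else if fst p b > fst p aB then fst p b + 1 else fst p b, snd p)))"

definition winner :: "arrow_type \<Rightarrow> 'a::finite comb \<Rightarrow> 'a" where
  "winner t p = (case t of Top \<Rightarrow> top_last p | Bot \<Rightarrow> bot_last p)"

text \<open>An infinite path in the Rauzy diagram starting aT pi is given by pi and the
 sequence of types of its arrows; the n-th vertex is obtained by the Rauzy moves.\<close>
fun path_vertex :: "'a::finite comb \<Rightarrow> (nat \<Rightarrow> arrow_type) \<Rightarrow> nat \<Rightarrow> 'a comb" where
  "path_vertex p g 0 = p"
| "path_vertex p g (Suc n) = rauzy_move (g n) (path_vertex p g n)"

definition path_winner :: "'a::finite comb \<Rightarrow> (nat \<Rightarrow> arrow_type) \<Rightarrow> nat \<Rightarrow> 'a" where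
  "path_winner p g n = winner (g n) (path_vertex p g n)"

definition complete_segment :: "'a::finite comb \<Rightarrow> (nat \<Rightarrow> arrow_type) \<Rightarrow> nat \<Rightarrow> nat \<Rightarrow> bool" where
  "complete_segment p g a b \<longleftrightarrow> (\<forall>x::'a. \<exists>n\<in>{a..<b}. path_winner p g n = x)"

definition infty_complete :: "'a::finite comb \<Rightarrow> (nat \<Rightarrow> arrow_type) \<Rightarrow> bool" where
  "infty_complete p g \<longleftrightarrow> (\<exists>ns::nat \<Rightarrow> nat. strict_mono ns \<and> ns 0 = 0 \<and>
      (\<forall>k. complete_segment p g (ns k) (ns (Suc k))))"

text \<open>An affine i.e.m. on [0,L) is determined by its combinatorial datum and the
 lengths of the top intervals I^t_alpha (ordered by pi_t) and bottom intervals
 I^b_alpha (ordered by pi_b); it maps I^t_alpha affinely increasingly onto I^b_alpha.\<close>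
record 'a aiem =
  ptop :: "'a \<Rightarrow> nat"
  pbot :: "'a \<Rightarrow> nat"
  ltop :: "real ^ 'a"
  lbot :: "real ^ 'a"

definition comb_of :: "('a::finite, 'b) aiem_scheme \<Rightarrow> 'a comb" where
  "comb_of D = (ptop D, pbot D)"

definition is_aiem :: "'a::finite aiem \<Rightarrow> bool" where
  "is_aiem D \<longleftrightarrow> valid_comb (comb_of D) \<and> (\<forall>a. ltop D $ a > 0) \<and> (\<forall>a. lbot D $ a > 0)
     \<and> (\<Sum>a\<in>UNIV. ltop D $ a) = (\<Sum>a\<in>UNIV. lbot D $ a)"

text \<open>The map itself (for reference): left endpoints of the top/bottom intervals.\<close>
definition u_top :: "'a::finite aiem \<Rightarrow> 'a \<Rightarrow> real" where
  "u_top D a = (\<Sum>b\<in>{b. ptop D b < ptop D a}. ltop D $ b)"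

definition u_bot :: "'a::finite aiem \<Rightarrow> 'a \<Rightarrow> real" where
  "u_bot D a = (\<Sum>b\<in>{b. pbot D b < pbot D a}. lbot D $ b)"

definition aiem_map :: "'a::finite aiem \<Rightarrow> real \<Rightarrow> real" where
  "aiem_map D x = (let a = (THE a. u_top D a \<le> x \<and> x < u_top D a + ltop D $ a) in
      u_bot D a + (lbot D $ a / ltop D $ a) * (x - u_top D a))"

definition rv_type :: "'a::finite aiem \<Rightarrow> arrow_type" where
  "rv_type D = (if u_top D (top_last (comb_of D)) < u_bot D (bot_last (comb_of D)) then Top else Bot)"

text \<open>One Rauzy-Veech step: the data of the first return map to
 (0, max(u^t_{d-1}, u^b_{d-1})).\<close>
definition rv_step :: "'a::finite aiem \<Rightarrow> 'a aiem" where
  "rv_step D = (let p = comb_of D; aT = top_last p; aB = bot_last p; t = rv_type D;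
       p' = rauzy_move t p in
     (case t of
       Top \<Rightarrow> (let s = lbot D $ aT / ltop D $ aT in
          \<lparr> ptop = fst p', pbot = snd p',
            ltop = (\<chi> b. if b = aT then ltop D $ aT - lbot D $ aB else ltop D $ b),
            lbot = (\<chi> b. if b = aT then lbot D $ aT - s * lbot D $ aB
                         else if b = aB then s * lbot D $ aB else lbot D $ b) \<rparr>)
     | Bot \<Rightarrow> (let s = lbot D $ aB / ltop D $ aB in
          \<lparr> ptop = fst p', pbot = snd p',
            ltop = (\<chi> b. if b = aB then ltop D $ aB - ltop D $ aT / s
                         else if b = aT then ltop D $ aT / s else ltop D $ b),
            lbot = (\<chi> b. if b = aB then lbot D $ aB - ltop D $ aT else lbot D $ b) \<rparr>)))"

text \<open>D has the infinite Rauzy-Veech path (comb_of D, g): the algorithm never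
 degenerates and the n-th arrow has type g n.\<close>
definition has_rv_path :: "'a::finite aiem \<Rightarrow> (nat \<Rightarrow> arrow_type) \<Rightarrow> bool" where
  "has_rv_path D g \<longleftrightarrow> (\<forall>n. is_aiem ((rv_step ^^ n) D) \<and> rv_type ((rv_step ^^ n) D) = g n)"

definition standard_iem :: "'a::finite comb \<Rightarrow> real ^ 'a \<Rightarrow> 'a aiem" where
  "standard_iem p l = \<lparr> ptop = fst p, pbot = snd p, ltop = l, lbot = l \<rparr>"

text \<open>Aff(gamma, w), gamma = infinite path from p with arrow types g: affine i.e.m.
 with |I^b_a| = exp(w_a) |I^t_a| and Rauzy-Veech path gamma.\<close>
definition Aff :: "'a::finite comb \<Rightarrow> (nat \<Rightarrow> arrow_type) \<Rightarrow> real ^ 'a \<Rightarrow> 'a aiem set" where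
  "Aff p g w = {D. is_aiem D \<and> comb_of D = p \<and> (\<forall>a. lbot D $ a = exp (w $ a) * ltop D $ a)
                  \<and> has_rv_path D g}"

definition Aff1 :: "'a::finite comb \<Rightarrow> (nat \<Rightarrow> arrow_type) \<Rightarrow> real ^ 'a \<Rightarrow> (real ^ 'a) set" where
  "Aff1 p g w = {ltop D | D. D \<in> Aff p g w \<and> (\<Sum>a\<in>UNIV. ltop D $ a) = 1}"

end

theory Submission
  imports Defs
begin

lemma card_pos_finite: "CARD('a::finite) \<ge> 1"
  by (simp add: Suc_leI finite_UNIV_card_ge_0)

lemma bij_last:
  fixes f :: "'a::finite \<Rightarrow> nat"
  assumes "bij_betw f UNIV {1..CARD('a)}"
  shows "f (THE a. f a = CARD('a)) = CARD('a)" "\<And>b. f b = CARD('a) \<longleftrightarrow> b = (THE a. f a = CARD('a))"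
    "\<And>b. f b \<ge> 1" "\<And>b. f b \<le> CARD('a)"
proof -
  have im: "f ` UNIV = {1..CARD('a)}" and inj: "inj f" using assms by (auto simp: bij_betw_def)
  have "CARD('a) \<in> f ` UNIV" using im card_pos_finite[where 'a='a] by auto
  then obtain a where a: "f a = CARD('a)" by auto
  have ex1: "\<exists>!a. f a = CARD('a)"
  proof (rule ex1I[of _ a])
    show "f a = CARD('a)" by (rule a)
    fix b assume "f b = CARD('a)" thus "b = a" using injD[OF inj, of b a] a by simp
  qed
  show "f (THE a. f a = CARD('a)) = CARD('a)" by (rule theI'[OF ex1])
  show "\<And>b. f b = CARD('a) \<longleftrightarrow> b = (THE a. f a = CARD('a))"
    using the1_equality[OF ex1] theI'[OF ex1] by blast
  show "\<And>b. f b \<ge> 1" "\<And>b. f b \<le> CARD('a)" using im by auto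
qed

lemma valid_fst: "valid_comb (q::'a::finite comb) \<Longrightarrow> bij_betw (fst q) UNIV {1..CARD('a)}"
  and valid_snd: "valid_comb (q::'a::finite comb) \<Longrightarrow> bij_betw (snd q) UNIV {1..CARD('a)}"
  by (auto simp: valid_comb_def)

lemma top_last_props:
  assumes "valid_comb (q::'a::finite comb)"
  shows "fst q (top_last q) = CARD('a)" "\<And>b. fst q b = CARD('a) \<longleftrightarrow> b = top_last q"
    "\<And>b. fst q b \<ge> 1" "\<And>b. fst q b \<le> CARD('a)"
  using bij_last[OF valid_fst[OF assms]] unfolding top_last_def by blast+

lemma bot_last_props:
  assumes "valid_comb (q::'a::finite comb)"
  shows "snd q (bot_last q) = CARD('a)" "\<And>b. snd q b = CARD('a) \<longleftrightarrow> b = bot_last q"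
    "\<And>b. snd q b \<ge> 1" "\<And>b. snd q b \<le> CARD('a)"
  using bij_last[OF valid_snd[OF assms]] unfolding bot_last_def by blast+

definition ins_move :: "('a \<Rightarrow> nat) \<Rightarrow> 'a \<Rightarrow> 'a \<Rightarrow> 'a \<Rightarrow> nat" where
  "ins_move f x y = (\<lambda>b. if b = y then f x + 1 else if f b > f x then f b + 1 else f b)"

lemma ins_move_bij:
  fixes f :: "'a::finite \<Rightarrow> nat"
  assumes bij: "bij_betw f UNIV {1..CARD('a)}" and xy: "x \<noteq> y" and fy: "f y = CARD('a)"
  shows "bij_betw (ins_move f x y) UNIV {1..CARD('a)}"
proof -
  have inj: "inj f" and im: "f ` UNIV = {1..CARD('a)}" using bij by (auto simp: bij_betw_def)
  have le: "\<And>b. f b \<le> CARD('a)" and ge1: "\<And>b. f b \<ge> 1" using im by auto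
  have ne: "\<And>b. b \<noteq> y \<Longrightarrow> f b < CARD('a)"
  proof -
    fix b assume "b \<noteq> y"
    hence "f b \<noteq> f y" using injD[OF inj, of b y] by blast
    thus "f b < CARD('a)" using le[of b] fy by simp
  qed
  have fx: "f x < CARD('a)" using ne xy by blast
  have inj2: "inj (ins_move f x y)"
  proof (rule injI)
    fix b1 b2 assume h: "ins_move f x y b1 = ins_move f x y b2"
    have "f b1 = f b2 \<or> b1 = b2"
      using h unfolding ins_move_def by (simp split: if_splits)
    thus "b1 = b2" using injD[OF inj, of b1 b2] by blast
  qed
  have sub: "range (ins_move f x y) \<subseteq> {1..CARD('a)}"
  proof
    fix z assume "z \<in> range (ins_move f x y)"
    then obtain b where z: "z = ins_move f x y b" by blast
    show "z \<in> {1..CARD('a)}"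
    proof (cases "b = y")
      case True thus ?thesis using z fx by (simp add: ins_move_def)
    next
      case False thus ?thesis using z ne[OF False] ge1[of b] by (simp add: ins_move_def)
    qed
  qed
  have "card (range (ins_move f x y)) = CARD('a)"
    using inj2 by (simp add: card_image)
  hence "range (ins_move f x y) = {1..CARD('a)}"
    using sub by (intro card_subset_eq) auto
  thus ?thesis using inj2 by (simp add: bij_betw_def)
qed

lemma ins_move_irr:
  fixes f h :: "'a::finite \<Rightarrow> nat"
  assumes bij: "bij_betw f UNIV {1..CARD('a)}" and xy: "x \<noteq> y" and fy: "f y = CARD('a)"
    and hx: "h x = CARD('a)"
    and irr: "\<forall>k. 1 \<le> k \<and> k < CARD('a) \<longrightarrow> h -` {1..k} \<noteq> f -` {1..k}"
    and k: "1 \<le> k" "k < CARD('a)"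
  shows "h -` {1..k} \<noteq> ins_move f x y -` {1..k}"
proof
  assume eq: "h -` {1..k} = ins_move f x y -` {1..k}"
  have im: "f ` UNIV = {1..CARD('a)}" using bij by (auto simp: bij_betw_def)
  have ge1: "\<And>b. f b \<ge> 1" using im by auto
  have xnot: "x \<notin> h -` {1..k}" using hx k by auto
  have "y \<notin> ins_move f x y -` {1..k}"
  proof
    assume "y \<in> ins_move f x y -` {1..k}"
    hence "f x + 1 \<le> k" by (simp add: ins_move_def)
    hence "x \<in> ins_move f x y -` {1..k}" using xy ge1[of x] by (simp add: ins_move_def)
    thus False using eq xnot by simp
  qed
  hence fxk: "f x \<ge> k" by (simp add: ins_move_def)
  have "f -` {1..k} = ins_move f x y -` {1..k}"
  proof (rule set_eqI)
    fix b
    show "b \<in> f -` {1..k} \<longleftrightarrow> b \<in> ins_move f x y -` {1..k}"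
    proof (cases "b = y")
      case True thus ?thesis using fy k fxk by (simp add: ins_move_def)
    next
      case False thus ?thesis using fxk by (simp add: ins_move_def)
    qed
  qed
  thus False using eq irr k by metis
qed

lemma rauzy_move_Top: "rauzy_move Top q = (fst q, ins_move (snd q) (top_last q) (bot_last q))"
  by (simp add: rauzy_move_def ins_move_def Let_def)
lemma rauzy_move_Bot: "rauzy_move Bot q = (ins_move (fst q) (bot_last q) (top_last q), snd q)"
  by (simp add: rauzy_move_def ins_move_def Let_def)

lemma top_last_Top: "top_last (rauzy_move Top q) = top_last q"
  by (simp add: rauzy_move_Top top_last_def)
lemma bot_last_Bot: "bot_last (rauzy_move Bot q) = bot_last q"
  by (simp add: rauzy_move_Bot bot_last_def)


lemma irr_ne:
  assumes "irreducible (q::'a::finite comb)" "CARD('a) \<ge> 2"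
  shows "top_last q \<noteq> bot_last q"
proof
  assume eq: "top_last q = bot_last q"
  have v: "valid_comb q" using assms by (simp add: irreducible_def)
  let ?k = "CARD('a) - 1"
  have "fst q -` {1..?k} = snd q -` {1..?k}"
  proof (rule set_eqI)
    fix b
    have "b \<in> fst q -` {1..?k} \<longleftrightarrow> fst q b \<noteq> CARD('a)"
      using top_last_props(3,4)[OF v, of b] assms(2) by auto
    also have "\<dots> \<longleftrightarrow> snd q b \<noteq> CARD('a)"
      using top_last_props(2)[OF v, of b] bot_last_props(2)[OF v, of b] eq by simp
    also have "\<dots> \<longleftrightarrow> b \<in> snd q -` {1..?k}"
      using bot_last_props(3,4)[OF v, of b] assms(2) by auto
    finally show "b \<in> fst q -` {1..?k} \<longleftrightarrow> b \<in> snd q -` {1..?k}" .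
  qed
  moreover have "1 \<le> ?k" "?k < CARD('a)" using assms(2) by auto
  ultimately show False using assms(1) unfolding irreducible_def by blast
qed

lemma irr_move:
  assumes "irreducible (q::'a::finite comb)" "CARD('a) \<ge> 2"
  shows "irreducible (rauzy_move t q)"
proof -
  have v: "valid_comb q" using assms by (simp add: irreducible_def)
  have ne: "top_last q \<noteq> bot_last q" by (rule irr_ne[OF assms])
  have irr: "\<forall>k. 1 \<le> k \<and> k < CARD('a) \<longrightarrow> fst q -` {1..k} \<noteq> snd q -` {1..k}"
      using assms(1) by (simp add: irreducible_def)
  show ?thesis
  proof (cases t)
    case Top
    show ?thesis unfolding Top rauzy_move_Top irreducible_def valid_comb_def fst_conv snd_conv
      using valid_fst[OF v] ins_move_bij[OF valid_snd[OF v] ne bot_last_props(1)[OF v]]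
        ins_move_irr[OF valid_snd[OF v] ne bot_last_props(1)[OF v] top_last_props(1)[OF v] irr]
      by blast
  next
    case Bot
    have irr': "\<forall>k. 1 \<le> k \<and> k < CARD('a) \<longrightarrow> snd q -` {1..k} \<noteq> fst q -` {1..k}"
      using irr by metis
    show ?thesis unfolding Bot rauzy_move_Bot irreducible_def valid_comb_def fst_conv snd_conv
      using valid_snd[OF v] ins_move_bij[OF valid_fst[OF v] ne[symmetric] top_last_props(1)[OF v]]
        ins_move_irr[OF valid_fst[OF v] ne[symmetric] top_last_props(1)[OF v] bot_last_props(1)[OF v] irr']
      by metis
  qed
qed

lemma irr_path:
  assumes "irreducible (p::'a::finite comb)" "CARD('a) \<ge> 2"
  shows "irreducible (path_vertex p g n)"
proof (induction n)
  case 0 thus ?case using assms by simp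
next
  case (Suc n) thus ?case using irr_move[OF _ assms(2)] by simp
qed


section \<open>Linear model\<close>

definition wstep :: "arrow_type \<Rightarrow> 'a::finite \<Rightarrow> 'a \<Rightarrow> real^'a \<Rightarrow> real^'a" where
  "wstep t x y W = (case t of Top \<Rightarrow> (\<chi> b. if b = y then W$y + W$x else W$b)
                            | Bot \<Rightarrow> (\<chi> b. if b = x then W$x + W$y else W$b))"

definition xstep :: "arrow_type \<Rightarrow> 'a::finite \<Rightarrow> 'a \<Rightarrow> real^'a \<Rightarrow> real^'a \<Rightarrow> real^'a" where
  "xstep t x y W v = (case t of Top \<Rightarrow> (\<chi> b. if b = x then v$x - exp (W$y) * v$y else v$b)
      | Bot \<Rightarrow> (\<chi> b. if b = y then v$y - v$x / exp (W$y) else if b = x then v$x / exp (W$y) else v$b))"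

definition istep :: "arrow_type \<Rightarrow> 'a::finite \<Rightarrow> 'a \<Rightarrow> real^'a \<Rightarrow> real^'a \<Rightarrow> real^'a" where
  "istep t x y W z = (case t of Top \<Rightarrow> (\<chi> b. if b = x then z$x + exp (W$y) * z$y else z$b)
      | Bot \<Rightarrow> (\<chi> b. if b = y then z$y + z$x else if b = x then exp (W$y) * z$x else z$b))"

lemma sum_two_change:
  fixes f g :: "'a::finite \<Rightarrow> real"
  assumes "x \<noteq> y" "\<And>b. b \<noteq> x \<Longrightarrow> b \<noteq> y \<Longrightarrow> f b = g b"
  shows "(\<Sum>b\<in>UNIV. f b) = (\<Sum>b\<in>UNIV. g b) + (f x - g x) + (f y - g y)"
proof -
  have "(\<Sum>b\<in>UNIV. f b - g b) = (\<Sum>b\<in>{x,y}. f b - g b)"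
    by (rule sum.mono_neutral_right) (use assms in auto)
  also have "\<dots> = (f x - g x) + (f y - g y)" using assms(1) by simp
  finally show ?thesis by (simp add: sum_subtractf)
qed

lemma xstep_istep: "x \<noteq> y \<Longrightarrow> xstep t x y W (istep t x y W z) = z"
  by (cases t) (auto simp: xstep_def istep_def vec_eq_iff)

lemma istep_xstep: "x \<noteq> y \<Longrightarrow> istep t x y W (xstep t x y W v) = v"
  by (cases t) (auto simp: xstep_def istep_def vec_eq_iff)

lemma istep_nonneg: "(\<And>a. z$a \<ge> 0) \<Longrightarrow> istep t x y W z $ a \<ge> 0"
  by (cases t) (auto simp: istep_def)

lemma xstep_linear: "linear (xstep t x y W)"
  by (rule linearI) (cases t; auto simp: xstep_def vec_eq_iff algebra_simps add_divide_distrib diff_divide_distrib)+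

lemma wstep_zero: "wstep t x y 0 = 0"
  by (cases t) (auto simp: wstep_def vec_eq_iff)

lemma xstep_sum_inv:
  assumes "x \<noteq> y"
  shows "(\<Sum>b\<in>UNIV. (exp (wstep t x y W $ b) - 1) * xstep t x y W v $ b) = (\<Sum>b\<in>UNIV. (exp (W $ b) - 1) * v $ b)"
proof (cases t)
  case Top
  show ?thesis
    apply (subst sum_two_change[OF assms, where g = "\<lambda>b. (exp (W $ b) - 1) * v $ b"])
    using assms apply (simp add: Top wstep_def xstep_def)
    using assms apply (simp add: Top wstep_def xstep_def exp_add algebra_simps)
    done
next
  case Bot
  show ?thesis
    apply (subst sum_two_change[OF assms, where g = "\<lambda>b. (exp (W $ b) - 1) * v $ b"])
    using assms apply (simp add: Bot wstep_def xstep_def)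
    using assms apply (simp add: Bot wstep_def xstep_def exp_add field_simps)
    done
qed

lemma xstep_dual:
  assumes "x \<noteq> y"
  shows "(\<Sum>b\<in>UNIV. xstep t x y 0 v $ b * wstep t x y W $ b) = (\<Sum>b\<in>UNIV. v $ b * W $ b)"
proof (cases t)
  case Top
  show ?thesis
    apply (subst sum_two_change[OF assms, where g = "\<lambda>b. v $ b * W $ b"])
    using assms apply (simp add: Top wstep_def xstep_def)
    using assms apply (simp add: Top wstep_def xstep_def algebra_simps)
    done
next
  case Bot
  show ?thesis
    apply (subst sum_two_change[OF assms, where g = "\<lambda>b. v $ b * W $ b"])
    using assms apply (simp add: Bot wstep_def xstep_def)
    using assms apply (simp add: Bot wstep_def xstep_def algebra_simps)
    done
qed


abbreviation aTn :: "'a::finite comb \<Rightarrow> (nat \<Rightarrow> arrow_type) \<Rightarrow> nat \<Rightarrow> 'a" where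
  "aTn p g n \<equiv> top_last (path_vertex p g n)"
abbreviation aBn :: "'a::finite comb \<Rightarrow> (nat \<Rightarrow> arrow_type) \<Rightarrow> nat \<Rightarrow> 'a" where
  "aBn p g n \<equiv> bot_last (path_vertex p g n)"

fun Wv :: "'a::finite comb \<Rightarrow> (nat \<Rightarrow> arrow_type) \<Rightarrow> real^'a \<Rightarrow> nat \<Rightarrow> real^'a" where
  "Wv p g w 0 = w"
| "Wv p g w (Suc n) = wstep (g n) (aTn p g n) (aBn p g n) (Wv p g w n)"

fun Xv :: "'a::finite comb \<Rightarrow> (nat \<Rightarrow> arrow_type) \<Rightarrow> real^'a \<Rightarrow> nat \<Rightarrow> real^'a \<Rightarrow> real^'a" where
  "Xv p g w 0 v = v"
| "Xv p g w (Suc n) v = xstep (g n) (aTn p g n) (aBn p g n) (Wv p g w n) (Xv p g w n v)"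

fun IX :: "'a::finite comb \<Rightarrow> (nat \<Rightarrow> arrow_type) \<Rightarrow> real^'a \<Rightarrow> nat \<Rightarrow> real^'a \<Rightarrow> real^'a" where
  "IX p g w 0 z = z"
| "IX p g w (Suc n) z = IX p g w n (istep (g n) (aTn p g n) (aBn p g n) (Wv p g w n) z)"

definition NE :: "'a::finite comb \<Rightarrow> (nat \<Rightarrow> arrow_type) \<Rightarrow> bool" where
  "NE p g \<longleftrightarrow> (\<forall>n. aTn p g n \<noteq> aBn p g n)"

lemma Xv_IX: "NE p g \<Longrightarrow> Xv p g w n (IX p g w n z) = z"
proof (induction n arbitrary: z)
  case 0 thus ?case by simp
next
  case (Suc n) thus ?case by (simp add: xstep_istep NE_def)
qed

lemma IX_Xv: "NE p g \<Longrightarrow> IX p g w n (Xv p g w n v) = v"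
proof (induction n arbitrary: v)
  case 0 thus ?case by simp
next
  case (Suc n) thus ?case by (simp add: istep_xstep NE_def)
qed

lemma Xv_linear: "linear (Xv p g w n)"
proof (induction n)
  case 0 thus ?case by (simp add: linear_id[unfolded id_def])
next
  case (Suc n)
  have "Xv p g w (Suc n) = xstep (g n) (aTn p g n) (aBn p g n) (Wv p g w n) \<circ> Xv p g w n"
    by (rule ext) simp
  thus ?case using linear_compose[OF Suc xstep_linear] by metis
qed

lemma Wv_zero: "Wv p g 0 n = 0"
  by (induction n) (simp_all add: wstep_zero)

lemma Xv_sum_inv: "NE p g \<Longrightarrow>
  (\<Sum>b\<in>UNIV. (exp (Wv p g w n $ b) - 1) * Xv p g w n v $ b) = (\<Sum>b\<in>UNIV. (exp (w $ b) - 1) * v $ b)"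
proof (induction n)
  case 0 thus ?case by simp
next
  case (Suc n) thus ?case by (simp add: xstep_sum_inv NE_def)
qed

lemma Xv_dual: "NE p g \<Longrightarrow>
  (\<Sum>b\<in>UNIV. Xv p g 0 n v $ b * Wv p g w n $ b) = (\<Sum>b\<in>UNIV. v $ b * w $ b)"
proof (induction n)
  case 0 thus ?case by simp
next
  case (Suc n) thus ?case using xstep_dual[of "aTn p g n" "aBn p g n" "g n" "Xv p g 0 n v" "Wv p g w n"]
    by (simp add: NE_def Wv_zero)
qed

lemma IX_nonneg: "(\<And>a. z $ a \<ge> 0) \<Longrightarrow> m \<le> n \<Longrightarrow> \<exists>y. (\<forall>a. y $ a \<ge> 0) \<and> IX p g w n z = IX p g w m y"
proof (induction n arbitrary: z)
  case 0 thus ?case by auto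
next
  case (Suc n)
  show ?case
  proof (cases "m = Suc n")
    case True thus ?thesis using Suc.prems by auto
  next
    case False
    hence "m \<le> n" using Suc.prems by simp
    thus ?thesis using Suc.IH[of "istep (g n) (aTn p g n) (aBn p g n) (Wv p g w n) z"]
      istep_nonneg[OF Suc.prems(1)] by simp
  qed
qed

lemma Xv_IX_nonneg: "NE p g \<Longrightarrow> (\<And>a. z $ a \<ge> 0) \<Longrightarrow> m \<le> n \<Longrightarrow> Xv p g w m (IX p g w n z) $ a \<ge> 0"
  using IX_nonneg[of z m n p g w] Xv_IX by metis


lemma path_winner_eq: "path_winner p g n = (case g n of Top \<Rightarrow> aTn p g n | Bot \<Rightarrow> aBn p g n)"
  by (simp add: path_winner_def winner_def)

lemma pos_lemma:
  fixes u :: "real^'a::finite"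
  assumes ne: "NE p g" and ic: "infty_complete p g"
    and nn: "\<And>m a. Xv p g w m u $ a \<ge> 0" and u0: "u \<noteq> 0"
  shows "Xv p g w m u $ a > 0"
proof -
  define Z where "Z n = {a. Xv p g w n u $ a = 0}" for n
  have neq: "\<And>n. aTn p g n \<noteq> aBn p g n" using ne by (simp add: NE_def)
  have monoZ: "Z n \<subseteq> Z (Suc n)" for n
  proof
    fix a assume a: "a \<in> Z n"
    have e: "exp (Wv p g w n $ aBn p g n) > 0" by simp
    have nB: "Xv p g w n u $ aBn p g n \<ge> 0" "Xv p g w n u $ aTn p g n \<ge> 0" by (rule nn)+
    have nS: "Xv p g w (Suc n) u $ aBn p g n \<ge> 0" "Xv p g w (Suc n) u $ aTn p g n \<ge> 0" by (rule nn)+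
    show "a \<in> Z (Suc n)"
    proof (cases "g n")
      case Top
      show ?thesis
      proof (cases "a = aTn p g n")
        case True
        have "Xv p g w (Suc n) u $ a = - exp (Wv p g w n $ aBn p g n) * Xv p g w n u $ aBn p g n"
          using a True by (simp add: Z_def Top xstep_def)
        moreover have "exp (Wv p g w n $ aBn p g n) * Xv p g w n u $ aBn p g n \<ge> 0" using e nB by simp
        ultimately show ?thesis using nS True by (simp add: Z_def)
      next
        case False thus ?thesis using a by (simp add: Z_def Top xstep_def)
      qed
    next
      case Bot
      show ?thesis
      proof (cases "a = aBn p g n")
        case True
        have "Xv p g w (Suc n) u $ a = - (Xv p g w n u $ aTn p g n / exp (Wv p g w n $ aBn p g n))"
          using a True by (simp add: Z_def Bot xstep_def)
        moreover have "Xv p g w n u $ aTn p g n / exp (Wv p g w n $ aBn p g n) \<ge> 0" using e nB by simp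
        ultimately show ?thesis using nS True by (simp add: Z_def)
      next
        case False thus ?thesis using a by (auto simp: Z_def Bot xstep_def)
      qed
    qed
  qed
  have monoZ': "m \<le> n \<Longrightarrow> Z m \<subseteq> Z n" for m n
    by (rule lift_Suc_mono_le[of Z, OF monoZ]) simp
  have notU: "Z n \<noteq> UNIV" for n
  proof
    assume "Z n = UNIV"
    hence "Xv p g w n u = 0" by (auto simp: Z_def vec_eq_iff)
    also have "0 = Xv p g w n 0" using linear_0[OF Xv_linear] by simp
    finally have "IX p g w n (Xv p g w n u) = IX p g w n (Xv p g w n 0)" by simp
    thus False using IX_Xv[OF ne] u0 by simp
  qed
  define M where "M = Max (range (\<lambda>n. card (Z n)))"
  have fin: "finite (range (\<lambda>n. card (Z n)))"
    by (rule finite_subset[of _ "{0..CARD('a)}"]) (auto simp: card_mono)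
  have "M \<in> range (\<lambda>n. card (Z n))" unfolding M_def using fin by (intro Max_in) auto
  then obtain T where T: "card (Z T) = M" by auto
  have stab: "n \<ge> T \<Longrightarrow> Z n = Z T" for n
  proof -
    assume "n \<ge> T"
    hence sub: "Z T \<subseteq> Z n" by (rule monoZ')
    have "card (Z n) \<le> M" unfolding M_def using fin by (intro Max_ge) auto
    hence "card (Z T) = card (Z n)" using T card_mono[OF _ sub] by simp
    thus ?thesis using card_subset_eq[OF _ sub] by simp
  qed
  have ZT: "Z T = {}"
  proof (rule ccontr)
    assume "Z T \<noteq> {}"
    then obtain c where c: "c \<in> Z T" by auto
    obtain b where b: "b \<notin> Z T" using notU[of T] by auto
    have clos: "n \<ge> T \<Longrightarrow> path_winner p g n \<in> Z T \<Longrightarrow> aTn p g n \<in> Z T \<and> aBn p g n \<in> Z T" for n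
    proof -
      assume nT: "n \<ge> T" and wz: "path_winner p g n \<in> Z T"
      have ZnT: "Z n = Z T" by (rule stab[OF nT])
      have wn: "path_winner p g n \<in> Z n" using wz ZnT by simp
      have e: "exp (Wv p g w n $ aBn p g n) > 0" by simp
      have nB: "Xv p g w n u $ aBn p g n \<ge> 0" "Xv p g w n u $ aTn p g n \<ge> 0" by (rule nn)+
      have nS: "Xv p g w (Suc n) u $ aBn p g n \<ge> 0" "Xv p g w (Suc n) u $ aTn p g n \<ge> 0" by (rule nn)+
      have "aTn p g n \<in> Z n \<and> aBn p g n \<in> Z n"
      proof (cases "g n")
        case Top
        hence a0: "Xv p g w n u $ aTn p g n = 0" using wn by (simp add: path_winner_eq Z_def)
        hence "Xv p g w (Suc n) u $ aTn p g n = - exp (Wv p g w n $ aBn p g n) * Xv p g w n u $ aBn p g n"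
          by (simp add: Top xstep_def)
        moreover have "exp (Wv p g w n $ aBn p g n) * Xv p g w n u $ aBn p g n \<ge> 0"
          using nB e by simp
        ultimately have "exp (Wv p g w n $ aBn p g n) * Xv p g w n u $ aBn p g n = 0"
          using nS by linarith
        hence "Xv p g w n u $ aBn p g n = 0" using e by simp
        thus ?thesis using a0 by (simp add: Z_def)
      next
        case Bot
        hence a0: "Xv p g w n u $ aBn p g n = 0" using wn by (simp add: path_winner_eq Z_def)
        hence "Xv p g w (Suc n) u $ aBn p g n = - (Xv p g w n u $ aTn p g n / exp (Wv p g w n $ aBn p g n))"
          by (simp add: Bot xstep_def)
        moreover have "Xv p g w n u $ aTn p g n / exp (Wv p g w n $ aBn p g n) \<ge> 0"
          using nB e by simp
        ultimately have "Xv p g w n u $ aTn p g n / exp (Wv p g w n $ aBn p g n) = 0"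
          using nS by linarith
        hence "Xv p g w n u $ aTn p g n = 0" using e by simp
        thus ?thesis using a0 by (simp add: Z_def)
      qed
      thus ?thesis using ZnT by simp
    qed
    have bk: "n \<ge> T \<Longrightarrow> aTn p g (Suc n) \<in> Z T \<and> aBn p g (Suc n) \<in> Z T \<Longrightarrow> aTn p g n \<in> Z T \<and> aBn p g n \<in> Z T" for n
    proof -
      assume nT: "n \<ge> T" and zz: "aTn p g (Suc n) \<in> Z T \<and> aBn p g (Suc n) \<in> Z T"
      show ?thesis
      proof (cases "g n")
        case Top
        hence "aTn p g (Suc n) = aTn p g n" by (simp add: top_last_Top)
        hence "path_winner p g n \<in> Z T" using zz Top by (simp add: path_winner_eq)
        thus ?thesis using clos nT by blast
      next
        case Bot
        hence "aBn p g (Suc n) = aBn p g n" by (simp add: bot_last_Bot)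
        hence "path_winner p g n \<in> Z T" using zz Bot by (simp add: path_winner_eq)
        thus ?thesis using clos nT by blast
      qed
    qed
    have backk: "aTn p g (n + k) \<in> Z T \<and> aBn p g (n + k) \<in> Z T \<Longrightarrow> n \<ge> T \<Longrightarrow> aTn p g n \<in> Z T \<and> aBn p g n \<in> Z T" for n k
    proof (induction k)
      case 0 thus ?case by simp
    next
      case (Suc k)
      thus ?case using bk[of "n + k"] by simp
    qed
    obtain ns where ns: "strict_mono ns" "\<forall>k. complete_segment p g (ns k) (ns (Suc k))"
      using ic by (auto simp: infty_complete_def)
    obtain n1 where n1: "n1 \<in> {ns T..<ns (Suc T)}" "path_winner p g n1 = b"
      using ns(2)[rule_format, of T] unfolding complete_segment_def by blast
    obtain n2 where n2: "n2 \<in> {ns (Suc T)..<ns (Suc (Suc T))}" "path_winner p g n2 = c"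
      using ns(2)[rule_format, of "Suc T"] unfolding complete_segment_def by blast
    have "T \<le> ns T" using strict_mono_imp_increasing[OF ns(1)] by simp
    hence n1T: "n1 \<ge> T" using n1 by simp
    have n12: "n1 \<le> n2" using n1 n2 by simp
    have "aTn p g n2 \<in> Z T \<and> aBn p g n2 \<in> Z T" using clos[of n2] n2 n1T n12 c by simp
    hence "aTn p g n1 \<in> Z T \<and> aBn p g n1 \<in> Z T"
      using backk[of n1 "n2 - n1"] n12 n1T by simp
    moreover have "path_winner p g n1 \<in> {aTn p g n1, aBn p g n1}"
      by (simp add: path_winner_eq split: arrow_type.splits)
    ultimately show False using n1 b by auto
  qed
  have "Z m = {}"
  proof (cases "m \<le> T")
    case True thus ?thesis using monoZ'[OF True] ZT by simp
  next
    case False thus ?thesis using stab[of m] ZT by simp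
  qed
  hence "Xv p g w m u $ a \<noteq> 0" by (auto simp: Z_def)
  thus ?thesis using nn[of m a] by linarith
qed


definition smplx :: "(real^'a::finite) set" where
  "smplx = {u. (\<forall>a. u $ a \<ge> 0) \<and> (\<Sum>a\<in>UNIV. u $ a) = 1}"

lemma compact_smplx: "compact (smplx :: (real^'a::finite) set)"
proof -
  have cl: "closed (smplx :: (real^'a) set)"
    unfolding smplx_def
    by (intro closed_Collect_conj closed_Collect_all closed_Collect_le closed_Collect_eq continuous_intros)
  have "bounded (smplx :: (real^'a) set)"
    unfolding bounded_iff
  proof (intro exI ballI)
    fix u :: "real^'a" assume "u \<in> smplx"
    hence "(\<Sum>i\<in>UNIV. \<bar>u $ i\<bar>) = 1" by (simp add: smplx_def)
    thus "norm u \<le> 1" using norm_le_l1_cart[of u] by simp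
  qed
  thus ?thesis using cl by (simp add: compact_eq_bounded_closed)
qed

lemma Xv_scale: "Xv p g w m (r *\<^sub>R v) = r *\<^sub>R Xv p g w m v"
  using linear_cmul[OF Xv_linear] by blast

lemma limit_pick:
  fixes c :: "real^'a::finite"
  assumes ne: "NE p g"
    and H: "\<forall>n. \<exists>a. (\<Sum>b\<in>UNIV. c $ b * IX p g w n (axis a 1) $ b) \<le> 0"
  shows "\<exists>u. u \<in> smplx \<and> (\<forall>m a. Xv p g w m u $ a \<ge> 0) \<and> (\<Sum>b\<in>UNIV. c $ b * u $ b) \<le> 0"
proof -
  obtain a where a: "\<And>n. (\<Sum>b\<in>UNIV. c $ b * IX p g w n (axis (a n) 1) $ b) \<le> 0"
    using H by metis
  define v where "v n = IX p g w n (axis (a n) 1)" for n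
  have ax: "\<And>b i. axis (i::'a) (1::real) $ b \<ge> 0" by (simp add: axis_def)
  have vnn: "\<And>m n b. m \<le> n \<Longrightarrow> Xv p g w m (v n) $ b \<ge> 0"
    unfolding v_def by (rule Xv_IX_nonneg[OF ne ax])
  have v0: "v n $ b \<ge> 0" for n b using vnn[of 0 n b] by simp
  have vne: "v n \<noteq> 0" for n
  proof
    assume "v n = 0"
    hence "Xv p g w n (v n) = 0" using linear_0[OF Xv_linear] by simp
    moreover have "Xv p g w n (v n) = axis (a n) 1" unfolding v_def by (rule Xv_IX[OF ne])
    ultimately show False by (simp add: axis_eq_0_iff)
  qed
  define s where "s n = (\<Sum>b\<in>UNIV. v n $ b)" for n
  have spos: "s n > 0" for n
  proof -
    obtain b where "v n $ b \<noteq> 0" using vne[of n] by (auto simp: vec_eq_iff)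
    hence "v n $ b > 0" using v0[of n b] by simp
    moreover have "v n $ b \<le> s n" unfolding s_def
      by (rule member_le_sum) (auto simp: v0)
    ultimately show ?thesis by simp
  qed
  define u where "u n = (1 / s n) *\<^sub>R v n" for n
  have uS: "u n \<in> smplx" for n
    using spos[of n] v0 by (auto simp: smplx_def u_def s_def sum_divide_distrib[symmetric])
  obtain l r where l: "l \<in> smplx" and r: "strict_mono r" and lim: "(u \<circ> r) \<longlonglongrightarrow> l"
    using compact_imp_seq_compact[OF compact_smplx] uS unfolding seq_compact_def by metis
  have unn: "\<And>m n b. m \<le> n \<Longrightarrow> Xv p g w m (u n) $ b \<ge> 0"
    using vnn spos by (simp add: u_def Xv_scale less_imp_le)
  have lnn: "Xv p g w m l $ b \<ge> 0" for m b
  proof -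
    have "(\<lambda>k. Xv p g w m ((u \<circ> r) k)) \<longlonglongrightarrow> Xv p g w m l"
      using bounded_linear.tendsto[OF Xv_linear[unfolded linear_conv_bounded_linear] lim] by simp
    hence t: "(\<lambda>k. Xv p g w m ((u \<circ> r) k) $ b) \<longlonglongrightarrow> Xv p g w m l $ b"
      by (rule tendsto_vec_nth)
    show ?thesis
    proof (rule LIMSEQ_le_const[OF t], intro exI allI impI)
      fix k assume "k \<ge> m"
      hence "m \<le> r k" using strict_mono_imp_increasing[OF r, of k] by simp
      thus "0 \<le> Xv p g w m ((u \<circ> r) k) $ b" using unn by simp
    qed
  qed
  have phi: "(\<Sum>b\<in>UNIV. c $ b * l $ b) \<le> 0"
  proof -
    have t: "(\<lambda>k. \<Sum>b\<in>UNIV. c $ b * (u \<circ> r) k $ b) \<longlonglongrightarrow> (\<Sum>b\<in>UNIV. c $ b * l $ b)"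
      by (intro tendsto_intros lim)
    show ?thesis
    proof (rule LIMSEQ_le_const2[OF t], intro exI allI impI)
      fix k :: nat
      have "(\<Sum>b\<in>UNIV. c $ b * u (r k) $ b) = (1 / s (r k)) * (\<Sum>b\<in>UNIV. c $ b * v (r k) $ b)"
        by (simp add: u_def sum_distrib_left algebra_simps)
      also have "\<dots> \<le> 0" using spos[of "r k"] a[of "r k"]
        by (simp add: v_def divide_nonpos_pos)
      finally show "(\<Sum>b\<in>UNIV. c $ b * (u \<circ> r) k $ b) \<le> 0" by simp
    qed
  qed
  show ?thesis using l lnn phi by blast
qed


lemma Xv_add: "Xv p g w m (x + y) = Xv p g w m x + Xv p g w m y"
  using linear_add[OF Xv_linear] by blast

lemma cone_pick:
  fixes c :: "real^'a::finite"
  assumes ne: "NE p g"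
    and H1: "\<forall>n. \<exists>a. (\<Sum>b\<in>UNIV. c $ b * IX p g w n (axis a 1) $ b) \<le> 0"
    and H2: "\<forall>n. \<exists>a. (\<Sum>b\<in>UNIV. c $ b * IX p g w n (axis a 1) $ b) \<ge> 0"
  shows "\<exists>u. u \<in> smplx \<and> (\<forall>m a. Xv p g w m u $ a \<ge> 0) \<and> (\<Sum>b\<in>UNIV. c $ b * u $ b) = 0"
proof -
  obtain u1 where u1: "u1 \<in> smplx" "\<forall>m a. Xv p g w m u1 $ a \<ge> 0" "(\<Sum>b\<in>UNIV. c $ b * u1 $ b) \<le> 0"
    using limit_pick[OF ne H1] by blast
  have H2': "\<forall>n. \<exists>a. (\<Sum>b\<in>UNIV. (-c) $ b * IX p g w n (axis a 1) $ b) \<le> 0"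
    using H2 by (simp add: sum_negf)
  obtain u2 where u2: "u2 \<in> smplx" "\<forall>m a. Xv p g w m u2 $ a \<ge> 0" "(\<Sum>b\<in>UNIV. (-c) $ b * u2 $ b) \<le> 0"
    using limit_pick[OF ne H2'] by blast
  define f1 where "f1 = (\<Sum>b\<in>UNIV. c $ b * u1 $ b)"
  define f2 where "f2 = (\<Sum>b\<in>UNIV. c $ b * u2 $ b)"
  have f1: "f1 \<le> 0" using u1 by (simp add: f1_def)
  have f2: "f2 \<ge> 0" using u2 by (simp add: f2_def sum_negf)
  show ?thesis
  proof (cases "f1 = 0")
    case True thus ?thesis using u1 f1_def by metis
  next
    case False
    hence f1n: "f1 < 0" using f1 by simp
    define t where "t = f2 / (f2 - f1)"
    have t0: "t \<ge> 0" "t \<le> 1" using f1n f2 by (auto simp: t_def field_simps)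
    define u where "u = t *\<^sub>R u1 + (1 - t) *\<^sub>R u2"
    have "u \<in> smplx"
    proof -
      have "u $ a \<ge> 0" for a using u1(1) u2(1) t0 by (simp add: u_def smplx_def)
      moreover have "(\<Sum>a\<in>UNIV. u $ a) = t * (\<Sum>a\<in>UNIV. u1 $ a) + (1 - t) * (\<Sum>a\<in>UNIV. u2 $ a)"
        by (simp add: u_def sum.distrib sum_distrib_left)
      ultimately show ?thesis using u1(1) u2(1) by (simp add: smplx_def)
    qed
    moreover have "Xv p g w m u $ a \<ge> 0" for m a
      using u1(2) u2(2) t0 by (simp add: u_def Xv_add Xv_scale)
    moreover have "(\<Sum>b\<in>UNIV. c $ b * u $ b) = t * f1 + (1 - t) * f2"
    proof -
      have "(\<Sum>b\<in>UNIV. c $ b * u $ b) = (\<Sum>b\<in>UNIV. t * (c $ b * u1 $ b) + (1 - t) * (c $ b * u2 $ b))"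
        by (rule sum.cong) (simp_all add: u_def algebra_simps)
      also have "\<dots> = t * f1 + (1 - t) * f2"
        by (simp only: sum.distrib sum_distrib_left[symmetric] f1_def f2_def)
      finally show ?thesis .
    qed
    moreover have "t * f1 + (1 - t) * f2 = 0"
      using f1n f2 by (simp add: t_def field_simps)
    ultimately show ?thesis by metis
  qed
qed


definition mk :: "'a::finite comb \<Rightarrow> real^'a \<Rightarrow> real^'a \<Rightarrow> 'a aiem" where
  "mk q W x = \<lparr>ptop = fst q, pbot = snd q, ltop = x, lbot = (\<chi> a. exp (W $ a) * x $ a)\<rparr>"

lemma sum_rest:
  fixes f :: "'a::finite \<Rightarrow> real"
  shows "(\<Sum>b\<in>UNIV - {a}. f b) = (\<Sum>b\<in>UNIV. f b) - f a"
  by (simp add: sum_diff1)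

lemma u_top_mk:
  assumes v: "valid_comb q"
  shows "u_top (mk q W x) (top_last q) = (\<Sum>b\<in>UNIV. x $ b) - x $ top_last q"
proof -
  have h: "fst q b < CARD('a) \<longleftrightarrow> b \<noteq> top_last q" for b
    using top_last_props(2,4)[OF v, of b] by linarith
  have "{b. fst q b < fst q (top_last q)} = UNIV - {top_last q}"
    using h by (auto simp: top_last_props(1)[OF v])
  thus ?thesis by (simp add: u_top_def mk_def sum_rest)
qed

lemma u_bot_mk:
  assumes v: "valid_comb q"
  shows "u_bot (mk q W x) (bot_last q) = (\<Sum>b\<in>UNIV. exp (W $ b) * x $ b) - exp (W $ bot_last q) * x $ bot_last q"
proof -
  have h: "snd q b < CARD('a) \<longleftrightarrow> b \<noteq> bot_last q" for b
    using bot_last_props(2,4)[OF v, of b] by linarith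
  have "{b. snd q b < snd q (bot_last q)} = UNIV - {bot_last q}"
    using h by (auto simp: bot_last_props(1)[OF v])
  thus ?thesis by (simp add: u_bot_def mk_def sum_rest)
qed

lemma comb_of_mk: "comb_of (mk q W x) = q"
  by (simp add: comb_of_def mk_def)

lemma rv_type_mk:
  assumes v: "valid_comb q" and s: "(\<Sum>b\<in>UNIV. x $ b) = (\<Sum>b\<in>UNIV. exp (W $ b) * x $ b)"
  shows "rv_type (mk q W x) = (if exp (W $ bot_last q) * x $ bot_last q < x $ top_last q then Top else Bot)"
  unfolding rv_type_def comb_of_mk u_top_mk[OF v] u_bot_mk[OF v] s by auto

lemma is_aiem_mk:
  "is_aiem (mk q W x) \<longleftrightarrow> valid_comb q \<and> (\<forall>a. x $ a > 0) \<and> (\<Sum>b\<in>UNIV. x $ b) = (\<Sum>b\<in>UNIV. exp (W $ b) * x $ b)"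
  by (auto simp: is_aiem_def mk_def comb_of_def)

lemma rv_step_mk:
  assumes v: "valid_comb q" and ne: "top_last q \<noteq> bot_last q" and pos: "\<forall>a. x $ a > 0"
    and ty: "rv_type (mk q W x) = t"
  shows "rv_step (mk q W x) = mk (rauzy_move t q) (wstep t (top_last q) (bot_last q) W) (xstep t (top_last q) (bot_last q) W x)"
proof -
  let ?T = "top_last q" and ?B = "bot_last q"
  have xT: "x $ ?T > 0" and xB: "x $ ?B > 0" using pos by auto
  show ?thesis
  proof (cases t)
    case Top
    show ?thesis
      unfolding rv_step_def Let_def comb_of_mk ty Top
      using ne xT xB
      by (simp add: mk_def wstep_def xstep_def vec_eq_iff exp_add algebra_simps)
  next
    case Bot
    show ?thesis
      unfolding rv_step_def Let_def comb_of_mk ty Bot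
      using ne xT xB
      by (simp add: mk_def wstep_def xstep_def vec_eq_iff exp_add field_simps)
  qed
qed


lemma sum_e1: "(\<Sum>b\<in>UNIV. (exp (W $ b) - 1) * x $ b) = (\<Sum>b\<in>UNIV. exp (W $ b) * x $ b) - (\<Sum>b\<in>UNIV. x $ b)"
  by (simp add: left_diff_distrib sum_subtractf)

lemma sum_eq_n:
  assumes ne: "NE p g" and s0: "(\<Sum>b\<in>UNIV. v $ b) = (\<Sum>b\<in>UNIV. exp (w $ b) * v $ b)"
  shows "(\<Sum>b\<in>UNIV. Xv p g w n v $ b) = (\<Sum>b\<in>UNIV. exp (Wv p g w n $ b) * Xv p g w n v $ b)"
  using Xv_sum_inv[OF ne, of w n v] s0 unfolding sum_e1 by simp

lemma ty_lemma:
  assumes v: "valid_comb (path_vertex p g n)"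
    and s: "(\<Sum>b\<in>UNIV. Xv p g w n x $ b) = (\<Sum>b\<in>UNIV. exp (Wv p g w n $ b) * Xv p g w n x $ b)"
    and pos: "\<forall>a. Xv p g w (Suc n) x $ a > 0"
  shows "rv_type (mk (path_vertex p g n) (Wv p g w n) (Xv p g w n x)) = g n"
proof (cases "g n")
  case Top
  have "Xv p g w (Suc n) x $ aTn p g n > 0" using pos by blast
  hence "exp (Wv p g w n $ aBn p g n) * Xv p g w n x $ aBn p g n < Xv p g w n x $ aTn p g n"
    by (simp add: Top xstep_def)
  thus ?thesis using rv_type_mk[OF v s] Top by simp
next
  case Bot
  have "Xv p g w (Suc n) x $ aBn p g n > 0" using pos by blast
  hence "Xv p g w n x $ aTn p g n / exp (Wv p g w n $ aBn p g n) < Xv p g w n x $ aBn p g n"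
    by (simp add: Bot xstep_def)
  hence "\<not> exp (Wv p g w n $ aBn p g n) * Xv p g w n x $ aBn p g n < Xv p g w n x $ aTn p g n"
    by (simp add: divide_less_eq mult.commute)
  thus ?thesis using rv_type_mk[OF v s] Bot by simp
qed

lemma path_equiv:
  assumes val: "\<forall>n. valid_comb (path_vertex p g n)" and ne: "NE p g"
    and s0: "(\<Sum>b\<in>UNIV. v $ b) = (\<Sum>b\<in>UNIV. exp (w $ b) * v $ b)"
  shows "has_rv_path (mk p w v) g \<longleftrightarrow> (\<forall>n a. Xv p g w n v $ a > 0)"
proof
  assume H: "has_rv_path (mk p w v) g"
  have eq: "(rv_step ^^ n) (mk p w v) = mk (path_vertex p g n) (Wv p g w n) (Xv p g w n v)" for n
  proof (induction n)
    case 0 thus ?case by simp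
  next
    case (Suc n)
    have ia: "is_aiem (mk (path_vertex p g n) (Wv p g w n) (Xv p g w n v))"
      and ty: "rv_type (mk (path_vertex p g n) (Wv p g w n) (Xv p g w n v)) = g n"
      using H Suc unfolding has_rv_path_def by metis+
    have pos: "\<forall>a. Xv p g w n v $ a > 0" using ia by (simp add: is_aiem_mk)
    have neq: "aTn p g n \<noteq> aBn p g n" using ne by (simp add: NE_def)
    show ?case using rv_step_mk[OF val[rule_format] neq pos ty] Suc by simp
  qed
  show "\<forall>n a. Xv p g w n v $ a > 0"
    using H eq by (auto simp: has_rv_path_def is_aiem_mk)
next
  assume P: "\<forall>n a. Xv p g w n v $ a > 0"
  have s: "(\<Sum>b\<in>UNIV. Xv p g w n v $ b) = (\<Sum>b\<in>UNIV. exp (Wv p g w n $ b) * Xv p g w n v $ b)" for n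
    by (rule sum_eq_n[OF ne s0])
  have ty: "rv_type (mk (path_vertex p g n) (Wv p g w n) (Xv p g w n v)) = g n" for n
    using ty_lemma[OF val[rule_format] s] P by blast
  have eq: "(rv_step ^^ n) (mk p w v) = mk (path_vertex p g n) (Wv p g w n) (Xv p g w n v)" for n
  proof (induction n)
    case 0 thus ?case by simp
  next
    case (Suc n)
    have pos: "\<forall>a. Xv p g w n v $ a > 0" using P by blast
    have neq: "aTn p g n \<noteq> aBn p g n" using ne by (simp add: NE_def)
    show ?case using rv_step_mk[OF val[rule_format] neq pos ty] Suc by simp
  qed
  show "has_rv_path (mk p w v) g"
    unfolding has_rv_path_def eq using val P s ty by (simp add: is_aiem_mk)
qed


lemma card1_no_path:
  fixes D :: "'a::finite aiem"
  assumes c1: "CARD('a) = 1"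
  shows "\<not> has_rv_path D g"
proof
  assume H: "has_rv_path D g"
  have i0: "is_aiem D" using H unfolding has_rv_path_def by (metis funpow_0)
  have i1: "is_aiem (rv_step D)" using H unfolding has_rv_path_def by (metis funpow_0 funpow.simps(2) o_apply)
  obtain a :: 'a where U: "UNIV = {a}" using c1 card_1_singletonE by blast
  have alla: "\<And>x::'a. x = a" using U by blast
  have tl: "top_last (comb_of D) = a" and bl: "bot_last (comb_of D) = a" using alla by blast+
  have e1: "{b. ptop D b < ptop D a} = {}" using alla by (metis (mono_tags) empty_Collect_eq less_irrefl)
  have e2: "{b. pbot D b < pbot D a} = {}" using alla by (metis (mono_tags) empty_Collect_eq less_irrefl)
  have ty: "rv_type D = Bot" unfolding rv_type_def tl bl u_top_def u_bot_def e1 e2 by simp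
  have "(\<Sum>b\<in>UNIV. ltop D $ b) = (\<Sum>b\<in>UNIV. lbot D $ b)" using i0 by (simp add: is_aiem_def)
  hence "ltop D $ a = lbot D $ a" by (simp add: U)
  hence "lbot (rv_step D) $ a = 0" unfolding rv_step_def Let_def ty tl bl by simp
  thus False using i1 by (simp add: is_aiem_def) (metis less_irrefl)
qed

lemma mk_std: "standard_iem p l = mk p 0 l"
  by (simp add: standard_iem_def mk_def)

lemma aff_mem:
  assumes val: "\<forall>n. valid_comb (path_vertex p g n)" and ne: "NE p g"
  shows "D \<in> Aff p g w \<longleftrightarrow> (\<exists>x. D = mk p w x \<and> (\<forall>n a. Xv p g w n x $ a > 0)
      \<and> (\<Sum>b\<in>UNIV. x $ b) = (\<Sum>b\<in>UNIV. exp (w $ b) * x $ b))"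
proof
  assume A: "D \<in> Aff p g w"
  have Dm: "D = mk p w (ltop D)"
    using A by (cases D) (auto simp: Aff_def mk_def comb_of_def vec_eq_iff)
  have s: "(\<Sum>b\<in>UNIV. ltop D $ b) = (\<Sum>b\<in>UNIV. exp (w $ b) * ltop D $ b)"
  proof -
    have "is_aiem D" using A by (simp add: Aff_def)
    hence "is_aiem (mk p w (ltop D))" using Dm by simp
    thus ?thesis by (simp add: is_aiem_mk)
  qed
  have "has_rv_path (mk p w (ltop D)) g" using A Dm by (simp add: Aff_def)
  hence "\<forall>n a. Xv p g w n (ltop D) $ a > 0" using path_equiv[OF val ne s] by simp
  thus "\<exists>x. D = mk p w x \<and> (\<forall>n a. Xv p g w n x $ a > 0)
      \<and> (\<Sum>b\<in>UNIV. x $ b) = (\<Sum>b\<in>UNIV. exp (w $ b) * x $ b)" using Dm s by blast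
next
  assume "\<exists>x. D = mk p w x \<and> (\<forall>n a. Xv p g w n x $ a > 0)
      \<and> (\<Sum>b\<in>UNIV. x $ b) = (\<Sum>b\<in>UNIV. exp (w $ b) * x $ b)"
  then obtain x where x: "D = mk p w x" "\<forall>n a. Xv p g w n x $ a > 0"
      "(\<Sum>b\<in>UNIV. x $ b) = (\<Sum>b\<in>UNIV. exp (w $ b) * x $ b)" by blast
  have vp: "valid_comb p" using val[rule_format, of 0] by simp
  have pos0: "\<forall>a. x $ a > 0" using x(2)[rule_format, of 0] by simp
  have "has_rv_path (mk p w x) g" using path_equiv[OF val ne x(3)] x(2) by simp
  thus "D \<in> Aff p g w"
    using x vp pos0 by (simp add: Aff_def is_aiem_mk comb_of_mk) (simp add: mk_def)
qed


lemma sum_axis: "(\<Sum>b\<in>UNIV. axis a (1::real) $ b * f b) = f a"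
proof -
  have "\<And>b. axis a (1::real) $ b * f b = (if b = a then f a else 0)" by (simp add: axis_def)
  thus ?thesis by simp
qed

lemma signs:
  fixes W x :: "real^'a::finite"
  assumes pos: "\<forall>a. x $ a > 0" and s: "(\<Sum>b\<in>UNIV. f (W $ b) * x $ b) = 0"
  shows "\<exists>a. f (W $ a) \<le> 0" "\<exists>a. f (W $ a) \<ge> 0"
proof -
  show "\<exists>a. f (W $ a) \<le> 0"
  proof (rule ccontr)
    assume "\<not> ?thesis"
    hence "\<forall>a. f (W $ a) * x $ a > 0" using pos by (simp add: not_le)
    hence "(\<Sum>b\<in>UNIV. f (W $ b) * x $ b) > 0" by (intro sum_pos) auto
    thus False using s by simp
  qed
  show "\<exists>a. f (W $ a) \<ge> 0"
  proof (rule ccontr)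
    assume "\<not> ?thesis"
    hence "\<forall>a. f (W $ a) * x $ a < 0" using pos by (simp add: not_le mult_neg_pos)
    hence "(\<Sum>b\<in>UNIV. - (f (W $ b) * x $ b)) > 0" by (intro sum_pos) auto
    hence "(\<Sum>b\<in>UNIV. f (W $ b) * x $ b) < 0" by (simp add: sum_negf)
    thus False using s by simp
  qed
qed

lemma smplx_ne0: "u \<in> smplx \<Longrightarrow> u \<noteq> 0"
  by (auto simp: smplx_def)

lemma forward_dir:
  assumes val: "\<forall>n. valid_comb (path_vertex p g n)" and ne: "NE p g" and ic: "infty_complete p g"
    and A: "Aff p g w \<noteq> {}"
  shows "\<exists>l :: real ^ 'a::finite. (\<forall>a. l $ a > 0) \<and> (\<Sum>a\<in>UNIV. l $ a * w $ a) = 0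
              \<and> has_rv_path (standard_iem p l) g"
proof -
  obtain D where "D \<in> Aff p g w" using A by blast
  then obtain x where x: "\<forall>n a. Xv p g w n x $ a > 0"
      "(\<Sum>b\<in>UNIV. x $ b) = (\<Sum>b\<in>UNIV. exp (w $ b) * x $ b)"
    using aff_mem[OF val ne] by blast
  have S: "(\<Sum>b\<in>UNIV. (exp (Wv p g w n $ b) - 1) * Xv p g w n x $ b) = 0" for n
    using Xv_sum_inv[OF ne, of w n x] x(2) unfolding sum_e1 by simp
  have dual: "(\<Sum>b\<in>UNIV. w $ b * IX p g 0 n (axis a 1) $ b) = Wv p g w n $ a" for n a
  proof -
    have "(\<Sum>b\<in>UNIV. w $ b * IX p g 0 n (axis a 1) $ b) = (\<Sum>b\<in>UNIV. IX p g 0 n (axis a 1) $ b * w $ b)"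
      by (simp add: mult.commute)
    also have "\<dots> = (\<Sum>b\<in>UNIV. Xv p g 0 n (IX p g 0 n (axis a 1)) $ b * Wv p g w n $ b)"
      by (rule Xv_dual[OF ne, symmetric])
    also have "\<dots> = Wv p g w n $ a" by (simp add: Xv_IX[OF ne] sum_axis)
    finally show ?thesis .
  qed
  have H1: "\<forall>n. \<exists>a. (\<Sum>b\<in>UNIV. w $ b * IX p g 0 n (axis a 1) $ b) \<le> 0"
  proof
    fix n
    obtain a where "exp (Wv p g w n $ a) - 1 \<le> 0"
      using signs(1)[of "Xv p g w n x" "\<lambda>t. exp t - 1", OF _ S] x(1) by blast
    thus "\<exists>a. (\<Sum>b\<in>UNIV. w $ b * IX p g 0 n (axis a 1) $ b) \<le> 0" by (auto simp: dual)
  qed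
  have H2: "\<forall>n. \<exists>a. (\<Sum>b\<in>UNIV. w $ b * IX p g 0 n (axis a 1) $ b) \<ge> 0"
  proof
    fix n
    obtain a where "exp (Wv p g w n $ a) - 1 \<ge> 0"
      using signs(2)[of "Xv p g w n x" "\<lambda>t. exp t - 1", OF _ S] x(1) by blast
    thus "\<exists>a. (\<Sum>b\<in>UNIV. w $ b * IX p g 0 n (axis a 1) $ b) \<ge> 0" by (auto simp: dual)
  qed
  obtain u where u: "u \<in> smplx" "\<forall>m a. Xv p g 0 m u $ a \<ge> 0" "(\<Sum>b\<in>UNIV. w $ b * u $ b) = 0"
    using cone_pick[OF ne H1 H2] by blast
  have P: "\<forall>m a. Xv p g 0 m u $ a > 0"
    using pos_lemma[OF ne ic _ smplx_ne0[OF u(1)]] u(2) by blast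
  have "has_rv_path (mk p 0 u) g" using path_equiv[OF val ne, of u 0] P by simp
  moreover have "\<forall>a. u $ a > 0" using P[rule_format, of 0] by simp
  moreover have "(\<Sum>a\<in>UNIV. u $ a * w $ a) = 0" using u(3) by (simp add: mult.commute)
  ultimately show ?thesis by (auto simp: mk_std)
qed

lemma backward_dir:
  assumes val: "\<forall>n. valid_comb (path_vertex p g n)" and ne: "NE p g" and ic: "infty_complete p g"
    and l: "(\<forall>a. l $ a > 0)" "(\<Sum>a\<in>UNIV. l $ a * w $ a) = 0" "has_rv_path (standard_iem p l) g"
  shows "Aff p g (w :: real^'a::finite) \<noteq> {}"
proof -
  have P0: "\<forall>n a. Xv p g 0 n l $ a > 0" using path_equiv[OF val ne, of l 0] l(3) by (simp add: mk_std)
  have D: "(\<Sum>b\<in>UNIV. Wv p g w n $ b * Xv p g 0 n l $ b) = 0" for n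
    using Xv_dual[OF ne, of n l w] l(2) by (simp add: mult.commute)
  define c where "c = (\<chi> b. exp (w $ b) - 1)"
  have cc: "(\<Sum>b\<in>UNIV. c $ b * IX p g w n (axis a 1) $ b) = exp (Wv p g w n $ a) - 1" for n a
  proof -
    have "(\<Sum>b\<in>UNIV. c $ b * IX p g w n (axis a 1) $ b) = (\<Sum>b\<in>UNIV. (exp (w $ b) - 1) * IX p g w n (axis a 1) $ b)"
      by (simp add: c_def)
    also have "\<dots> = (\<Sum>b\<in>UNIV. (exp (Wv p g w n $ b) - 1) * Xv p g w n (IX p g w n (axis a 1)) $ b)"
      by (rule Xv_sum_inv[OF ne, symmetric])
    also have "\<dots> = exp (Wv p g w n $ a) - 1" by (simp add: Xv_IX[OF ne] sum_axis mult.commute)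
    finally show ?thesis .
  qed
  have H1: "\<forall>n. \<exists>a. (\<Sum>b\<in>UNIV. c $ b * IX p g w n (axis a 1) $ b) \<le> 0"
  proof
    fix n
    obtain a where "Wv p g w n $ a \<le> 0"
      using signs(1)[of "Xv p g 0 n l" "\<lambda>t. t", OF _ D] P0 by blast
    thus "\<exists>a. (\<Sum>b\<in>UNIV. c $ b * IX p g w n (axis a 1) $ b) \<le> 0" by (auto simp: cc)
  qed
  have H2: "\<forall>n. \<exists>a. (\<Sum>b\<in>UNIV. c $ b * IX p g w n (axis a 1) $ b) \<ge> 0"
  proof
    fix n
    obtain a where "Wv p g w n $ a \<ge> 0"
      using signs(2)[of "Xv p g 0 n l" "\<lambda>t. t", OF _ D] P0 by blast
    thus "\<exists>a. (\<Sum>b\<in>UNIV. c $ b * IX p g w n (axis a 1) $ b) \<ge> 0" by (auto simp: cc)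
  qed
  obtain u where u: "u \<in> smplx" "\<forall>m a. Xv p g w m u $ a \<ge> 0" "(\<Sum>b\<in>UNIV. c $ b * u $ b) = 0"
    using cone_pick[OF ne H1 H2] by blast
  have P: "\<forall>m a. Xv p g w m u $ a > 0"
    using pos_lemma[OF ne ic _ smplx_ne0[OF u(1)]] u(2) by blast
  have "(\<Sum>b\<in>UNIV. (exp (w $ b) - 1) * u $ b) = 0" using u(3) by (simp add: c_def)
  hence s: "(\<Sum>b\<in>UNIV. u $ b) = (\<Sum>b\<in>UNIV. exp (w $ b) * u $ b)" unfolding sum_e1 by simp
  have "mk p w u \<in> Aff p g w" using aff_mem[OF val ne] P s by blast
  thus ?thesis by blast
qed


definition Kset :: "'a::finite comb \<Rightarrow> (nat \<Rightarrow> arrow_type) \<Rightarrow> real^'a \<Rightarrow> (real^'a) set" where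
  "Kset p g w = {x. (\<forall>m a. Xv p g w m x $ a \<ge> 0) \<and> (\<Sum>b\<in>UNIV. x $ b) = 1
      \<and> (\<Sum>b\<in>UNIV. x $ b) = (\<Sum>b\<in>UNIV. exp (w $ b) * x $ b)}"

lemma aff1_eq:
  assumes val: "\<forall>n. valid_comb (path_vertex p g n)" and ne: "NE p g" and ic: "infty_complete p g"
  shows "Aff1 p g w = Kset p g w"
proof
  show "Aff1 p g w \<subseteq> Kset p g w"
  proof
    fix x assume "x \<in> Aff1 p g w"
    then obtain D where D: "D \<in> Aff p g w" "x = ltop D" "(\<Sum>a\<in>UNIV. ltop D $ a) = 1"
      by (auto simp: Aff1_def)
    then obtain y where y: "D = mk p w y" "\<forall>n a. Xv p g w n y $ a > 0"
      "(\<Sum>b\<in>UNIV. y $ b) = (\<Sum>b\<in>UNIV. exp (w $ b) * y $ b)"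
      using aff_mem[OF val ne] by blast
    have "x = y" using D(2) y(1) by (simp add: mk_def)
    moreover have "(\<Sum>b\<in>UNIV. y $ b) = 1" using D(3) y(1) by (simp add: mk_def)
    ultimately show "x \<in> Kset p g w" using y by (auto simp: Kset_def less_imp_le)
  qed
next
  show "Kset p g w \<subseteq> Aff1 p g w"
  proof
    fix x assume x: "x \<in> Kset p g w"
    have "x \<noteq> 0" using x by (auto simp: Kset_def)
    hence P: "\<forall>m a. Xv p g w m x $ a > 0" using pos_lemma[OF ne ic] x by (auto simp: Kset_def)
    have "mk p w x \<in> Aff p g w" using aff_mem[OF val ne] P x by (auto simp: Kset_def)
    moreover have "ltop (mk p w x) = x" by (simp add: mk_def)
    ultimately show "x \<in> Aff1 p g w" using x unfolding Aff1_def Kset_def by force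
  qed
qed

lemma Kset_convex: "convex (Kset p g w)"
proof (rule convexI)
  fix x y :: "real^'a" and u v :: real
  assume x: "x \<in> Kset p g w" and y: "y \<in> Kset p g w" and uv: "0 \<le> u" "0 \<le> v" "u + v = 1"
  have "Xv p g w m (u *\<^sub>R x + v *\<^sub>R y) $ a \<ge> 0" for m a
    using x y uv by (simp add: Xv_add Xv_scale Kset_def)
  moreover have "(\<Sum>b\<in>UNIV. (u *\<^sub>R x + v *\<^sub>R y) $ b) = u * (\<Sum>b\<in>UNIV. x $ b) + v * (\<Sum>b\<in>UNIV. y $ b)"
    by (simp add: sum.distrib sum_distrib_left)
  moreover have "(\<Sum>b\<in>UNIV. exp (w $ b) * (u *\<^sub>R x + v *\<^sub>R y) $ b)
      = u * (\<Sum>b\<in>UNIV. exp (w $ b) * x $ b) + v * (\<Sum>b\<in>UNIV. exp (w $ b) * y $ b)"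
    by (simp add: sum.distrib sum_distrib_left algebra_simps)
  moreover have "(\<Sum>b\<in>UNIV. x $ b) = 1" "(\<Sum>b\<in>UNIV. exp (w $ b) * x $ b) = 1"
    "(\<Sum>b\<in>UNIV. y $ b) = 1" "(\<Sum>b\<in>UNIV. exp (w $ b) * y $ b) = 1"
    using x y by (auto simp: Kset_def)
  ultimately show "u *\<^sub>R x + v *\<^sub>R y \<in> Kset p g w" using uv unfolding Kset_def mem_Collect_eq
    by (metis mult.right_neutral)
qed

lemma Kset_compact: "compact (Kset p g w)"
proof -
  have cont: "continuous_on UNIV (\<lambda>x. Xv p g w m x $ a)" for m a
  proof -
    have "bounded_linear (\<lambda>x. Xv p g w m x $ a)"
      by (rule bounded_linear_compose[OF bounded_linear_vec_nth Xv_linear[unfolded linear_conv_bounded_linear]])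
    thus ?thesis by (rule linear_continuous_on)
  qed
  have cl: "closed (Kset p g w)"
    unfolding Kset_def
    by (intro closed_Collect_conj closed_Collect_all closed_Collect_le closed_Collect_eq
        continuous_intros cont)
  have sub: "Kset p g w \<subseteq> smplx"
  proof
    fix x assume "x \<in> Kset p g w"
    hence "\<forall>a. Xv p g w 0 x $ a \<ge> 0" "(\<Sum>b\<in>UNIV. x $ b) = 1" unfolding Kset_def by blast+
    thus "x \<in> smplx" by (simp add: smplx_def)
  qed
  have "bounded (smplx :: (real^'a) set)" by (rule compact_imp_bounded[OF compact_smplx])
  hence "bounded (Kset p g w)" using sub by (rule bounded_subset)
  thus ?thesis using cl by (simp add: compact_eq_bounded_closed)
qed

theorem mainTheorem5:
  fixes p :: "'a::finite comb" and g :: "nat \<Rightarrow> arrow_type" and w :: "real ^ 'a"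
  assumes "irreducible p"
    and "infty_complete p g"
    and "w \<noteq> 0"
  shows "(Aff p g w \<noteq> {} \<longleftrightarrow>
           (\<exists>l :: real ^ 'a. (\<forall>a. l $ a > 0) \<and> (\<Sum>a\<in>UNIV. l $ a * w $ a) = 0
              \<and> has_rv_path (standard_iem p l) g))
       \<and> (Aff p g w \<noteq> {} \<longrightarrow> convex (Aff1 p g w) \<and> compact (Aff1 p g w))"
proof (cases "CARD('a) = 1")
  case True
  have "Aff p g w = {}" using card1_no_path[OF True] by (auto simp: Aff_def)
  moreover have "\<not> has_rv_path (standard_iem p l) g" for l using card1_no_path[OF True] by blast
  ultimately show ?thesis by blast
next
  case False
  hence c2: "CARD('a) \<ge> 2" using card_pos_finite[where 'a='a] by linarith
  have irr: "irreducible (path_vertex p g n)" for n by (rule irr_path[OF assms(1) c2])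
  have val: "\<forall>n. valid_comb (path_vertex p g n)" using irr by (simp add: irreducible_def)
  have ne: "NE p g" unfolding NE_def using irr_ne[OF irr c2] by blast
  have A: "Aff p g w \<noteq> {} \<longleftrightarrow>
           (\<exists>l :: real ^ 'a. (\<forall>a. l $ a > 0) \<and> (\<Sum>a\<in>UNIV. l $ a * w $ a) = 0
              \<and> has_rv_path (standard_iem p l) g)"
  proof
    assume "Aff p g w \<noteq> {}"
    thus "\<exists>l :: real ^ 'a. (\<forall>a. l $ a > 0) \<and> (\<Sum>a\<in>UNIV. l $ a * w $ a) = 0
              \<and> has_rv_path (standard_iem p l) g" by (rule forward_dir[OF val ne assms(2)])
  next
    assume "\<exists>l :: real ^ 'a. (\<forall>a. l $ a > 0) \<and> (\<Sum>a\<in>UNIV. l $ a * w $ a) = 0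
              \<and> has_rv_path (standard_iem p l) g"
    then obtain l :: "real^'a" where l: "(\<forall>a. l $ a > 0)" "(\<Sum>a\<in>UNIV. l $ a * w $ a) = 0"
      "has_rv_path (standard_iem p l) g" by blast
    show "Aff p g w \<noteq> {}" by (rule backward_dir[OF val ne assms(2) l])
  qed
  have K: "Aff1 p g w = Kset p g w" by (rule aff1_eq[OF val ne assms(2)])
  have C: "convex (Kset p g w) \<and> compact (Kset p g w)"
    using Kset_convex[of p g w] Kset_compact[of p g w] by (rule conjI)
  show ?thesis unfolding K
  proof (rule conjI)
    show "Aff p g w \<noteq> {} \<longrightarrow> convex (Kset p g w) \<and> compact (Kset p g w)" using C by (rule impI)
  qed (rule A)
qed

end
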